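(* With $X$, $Q$ as below, for every even $\ell>2$, \[\sum_{j=0}^{n_\ell-1}\mathrm{gap}^{X,Q}_{\ell,j}\ge\delta_\ell\ln(n_\ell)/2,\] where $\mathrm{gap}^{X,Q}_{\ell,j}$ denotes $\mathrm{gap}^{X,Q}_i$ for the index $i$ with $\vec x_i=\vec x_{\ell,j}$.
   Context: $X$ and $Q$ are indexed by layers $\ell\ge2$ and positions $0\le j\le n_\ell-1$, ordered lexicographically in $(\ell,j)$, with $\vec q_0=\vec0$ prepended to $Q$. $n_\ell:=\ell\lceil\ln^2\ell\rceil+1$, $\theta_\ell:=\frac{\pi}{2(n_\ell-1)}$, $\vec x_{\ell,j}:=(\cos(j\theta_\ell),\sin(j\theta_\ell))$ for even $\ell$ and $(\sin(j\theta_\ell),\cos(j\theta_\ell))$ for odd $\ell$. $\alpha:=\sum_{\ell=2}^\infty\frac1{\ell\ln^2\ell}$, $z_\ell:=\frac1\alpha\sum_{m=2}^\ell\frac1{m\ln^2m}$ ($z_1=0$), $\delta_\ell:=z_\ell-z_{\ell-1}=\frac1{\alpha\ell\ln^2\ell}$, $z_{\ell,j}:=1-\delta_\ell\cot((j+1)\theta_\ell)$ for $j<n_\ell-1$, $z_{\ell,n_\ell-1}:=1$. For even $\ell$, $\vec q_{\ell,j}:=(z_\ell,z_{\ell,j})$; for odd $\ell$, $\vec q_{\ell,j}$ is any maximizer of $\vec x_{\ell,j}\cdot\vec q_{\ell',j'}$ over $(\ell',j')$ with $\ell'<\ell$. For a sequence $X=(\vec x_i)$ and $Q=(\vec q_i)_{i\ge0}$,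 $\mathrm{gap}_i^{X,Q}:=\min_{0\le j<i}(\vec q_i-\vec q_j)\cdot\vec x_i$. *)

theory Defs
  imports "HOL-Analysis.Analysis"
begin

definition nL :: "nat \<Rightarrow> nat" where
  "nL l = l * nat \<lceil>(ln (real l))^2\<rceil> + 1"

definition thetaL :: "nat \<Rightarrow> real" where
  "thetaL l = pi / (2 * (real (nL l) - 1))"

definition xv :: "nat \<Rightarrow> nat \<Rightarrow> real \<times> real" where
  "xv l j = (if even l then (cos (real j * thetaL l), sin (real j * thetaL l))
                       else (sin (real j * thetaL l), cos (real j * thetaL l)))"

definition alphaC :: real where
  "alphaC = (\<Sum>m. 1 / (real (m + 2) * (ln (real (m + 2)))^2))"

definition zL :: "nat \<Rightarrow> real" where
  "zL l = (1 / alphaC) * (\<Sum>m=2..l. 1 / (real m * (ln (real m))^2))"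

definition deltaL :: "nat \<Rightarrow> real" where
  "deltaL l = 1 / (alphaC * real l * (ln (real l))^2)"

definition zLJ :: "nat \<Rightarrow> nat \<Rightarrow> real" where
  "zLJ l j = (if j < nL l - 1 then 1 - deltaL l * cot (real (j + 1) * thetaL l) else 1)"

definition idx :: "(nat \<times> nat) set" where
  "idx = {(l, j). 2 \<le> l \<and> j < nL l}"

definition before :: "nat \<Rightarrow> nat \<Rightarrow> (nat \<times> nat) set" where
  "before l j = {(l', j') \<in> idx. l' < l \<or> (l' = l \<and> j' < j)}"

definition valid_Q :: "(nat \<Rightarrow> nat \<Rightarrow> real \<times> real) \<Rightarrow> bool" where
  "valid_Q q \<longleftrightarrow>
     (\<forall>l j. even l \<and> 2 \<le> l \<and> j < nL l \<longrightarrow> q l j = (zL l, zLJ l j)) \<and>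
     (\<forall>l j. odd l \<and> 2 \<le> l \<and> j < nL l \<longrightarrow>
        (\<exists>l' j'. 2 \<le> l' \<and> l' < l \<and> j' < nL l' \<and> q l j = q l' j' \<and>
           (\<forall>l'' j''. 2 \<le> l'' \<and> l'' < l \<and> j'' < nL l'' \<longrightarrow>
              xv l j \<bullet> q l'' j'' \<le> xv l j \<bullet> q l' j')))"

text \<open>gap at index (l,j): minimum over all earlier Q-points, including q_0 = 0.\<close>

definition gap :: "(nat \<Rightarrow> nat \<Rightarrow> real \<times> real) \<Rightarrow> nat \<Rightarrow> nat \<Rightarrow> real" where
  "gap q l j = Min (insert ((q l j - 0) \<bullet> xv l j)
                      ((\<lambda>(l', j'). (q l j - q l' j') \<bullet> xv l j) ` before l j))"

end

theory Submission
  imports Defs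
begin

lemma g_mono: "2 \<le> m \<Longrightarrow> m \<le> n \<Longrightarrow> 1 / (real n * (ln (real n))^2) \<le> 1 / (real m * (ln (real m))^2)"
proof -
  assume a: "2 \<le> m" "m \<le> n"
  have l0: "0 < ln (real m)" using a by simp
  have l1: "ln (real m) \<le> ln (real n)" using a by simp
  have "(ln (real m))^2 \<le> (ln (real n))^2" using l0 l1 by (simp add: power_mono)
  hence "real m * (ln (real m))^2 \<le> real n * (ln (real n))^2"
    using a l0 by (intro mult_mono) auto
  moreover have "0 < real m * (ln (real m))^2" using a l0 by simp
  ultimately show ?thesis by (simp add: frac_le)
qed

lemma alpha_summable: "summable (\<lambda>m. 1 / (real (m + 2) * (ln (real (m + 2)))^2))"
proof -
  define g where "g = (\<lambda>n::nat. 1 / (real n * (ln (real n))^2))"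
  define h where "h = (\<lambda>n::nat. if n < 2 then g 2 else g n)"
  have hmono: "h (Suc m) \<le> h m" if "0 < m" for m
  proof (cases "m < 2")
    case True
    then have "m = 1" using that by simp
    then show ?thesis unfolding h_def by (simp add: numeral_2_eq_2)
  next
    case False
    then show ?thesis using g_mono[of "m" "Suc m"] unfolding h_def g_def by auto
  qed
  have hnn: "h n \<ge> 0" for n unfolding h_def g_def by auto
  have eq: "2^(Suc n) * h (2^Suc n) = (1 / (ln 2)^2) * (1 / (real n + 1)^2)" for n
  proof -
    have "(2::nat)^Suc n \<ge> 2" by (metis Suc_1 Suc_le_eq one_less_power zero_less_Suc lessI Suc_leI)
    hence "h (2^Suc n) = g (2^Suc n)" unfolding h_def by simp
    also have "\<dots> = 1 / (2^Suc n * (real (Suc n) * ln 2)^2)"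
    proof -
      have "ln (real (2^Suc n)) = real (Suc n) * ln 2"
        by (simp only: of_nat_power ln_realpow) simp
      thus ?thesis unfolding g_def by simp
    qed
    finally have "h (2^Suc n) = 1 / (2^Suc n * (real (Suc n) * ln 2)^2)" .
    thus ?thesis by (simp add: power_mult_distrib)
  qed
  have "summable (\<lambda>n. 1 / (real n + 1)^2)"
    using inverse_squares_sums[THEN sums_summable] by (simp add: add.commute)
  hence "summable (\<lambda>n. (1 / (ln 2)^2) * (1 / (real n + 1)^2))" by (rule summable_mult)
  hence "summable (\<lambda>n. 2^(Suc n) * h (2^Suc n))" by (simp only: eq)
  hence "summable (\<lambda>n. 2^n * h (2^n))" by (subst summable_Suc_iff[symmetric])
  hence "summable h" using condensation_test[of h] hmono hnn by blast
  hence "summable (\<lambda>m. h (m + 2))" by (subst summable_iff_shift)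
  moreover have "h (m+2) = 1 / (real (m + 2) * (ln (real (m + 2)))^2)" for m
    unfolding h_def g_def by simp
  ultimately show ?thesis by simp
qed

lemma alpha_pos: "alphaC > 0"
  unfolding alphaC_def
  by (rule suminf_pos[OF alpha_summable]) (auto intro!: divide_pos_pos)

lemma delta_nonneg: "deltaL m \<ge> 0"
  unfolding deltaL_def using alpha_pos by simp

lemma delta_pos: "2 \<le> m \<Longrightarrow> deltaL m > 0"
  unfolding deltaL_def using alpha_pos by simp

lemma zL_Suc: "zL (Suc m) = zL m + deltaL (Suc m)"
proof (cases "Suc m < 2")
  case True
  then have "m = 0" by simp
  then show ?thesis by (simp add: zL_def deltaL_def)
next
  case False
  then show ?thesis unfolding zL_def deltaL_def
    by (simp add: algebra_simps)
qed

lemma zL_mono: "a \<le> b \<Longrightarrow> zL a \<le> zL b"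
  by (rule lift_Suc_mono_le[of zL]) (auto simp: zL_Suc delta_nonneg)

lemma zL_nonneg: "zL m \<ge> 0"
  using zL_mono[of 0 m] by (simp add: zL_def)

lemma nL_facts:
  assumes "2 \<le> l"
  shows "nL l \<ge> 3" "thetaL l > 0" "real (nL l - 1) * thetaL l = pi / 2"
    "thetaL l \<le> pi / 4"
proof -
  have "ln (real l) > 0" using assms by simp
  hence "(ln (real l))^2 > 0" by simp
  hence c0: "1 \<le> \<lceil>(ln (real l))^2\<rceil>" by simp
  have c: "1 \<le> nat \<lceil>(ln (real l))^2\<rceil>" using nat_mono[OF c0] by simp
  have "l * 1 \<le> l * nat \<lceil>(ln (real l))^2\<rceil>" using c by (rule mult_le_mono2)
  hence "l * nat \<lceil>(ln (real l))^2\<rceil> \<ge> 2" using assms by (simp only: mult_1_right)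
  thus n3: "nL l \<ge> 3" unfolding nL_def by simp
  have thd: "thetaL l = pi / (2 * real (nL l - 1))" unfolding thetaL_def using n3 by (simp add: of_nat_diff)
  have p: "real (nL l - 1) \<ge> 2" using n3 by simp
  show "thetaL l > 0" unfolding thd using p by simp
  have h: "x * (pi / (2 * x)) = pi / 2" if "x \<noteq> 0" for x :: real using that by (simp add: field_simps)
  show "real (nL l - 1) * thetaL l = pi / 2" unfolding thd by (rule h) (use p in linarith)
  have "pi / (2 * real (nL l - 1)) \<le> pi / (2 * 2)"
    using p by (intro divide_left_mono) auto
  thus "thetaL l \<le> pi / 4" unfolding thd by simp
qed

lemma cot_nonneg: "0 < x \<Longrightarrow> x \<le> pi/2 \<Longrightarrow> cot x \<ge> 0"
  unfolding cot_def by (intro divide_nonneg_nonneg cos_ge_zero sin_ge_zero) auto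

lemma cot_mono: "0 < x \<Longrightarrow> x \<le> y \<Longrightarrow> y \<le> pi/2 \<Longrightarrow> cot y \<le> cot x"
proof -
  assume a: "0 < x" "x \<le> y" "y \<le> pi/2"
  have sx: "sin x > 0" using a by (intro sin_gt_zero) auto
  have sxy: "sin x \<le> sin y" using a by (intro sin_monotone_2pi_le) auto
  have cyx: "cos y \<le> cos x" using a by (intro cos_monotone_0_pi_le) auto
  have cy: "cos y \<ge> 0" using a by (intro cos_ge_zero) auto
  have "cos y / sin y \<le> cos y / sin x" using sx sxy cy by (intro divide_left_mono) auto
  also have "\<dots> \<le> cos x / sin x" using sx cyx by (intro divide_right_mono) auto
  finally show ?thesis by (simp add: cot_def)
qed

lemma zLJ_le1:
  assumes "2 \<le> l" shows "zLJ l j \<le> 1"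
proof (cases "j < nL l - 1")
  case True
  have "real (j+1) * thetaL l \<le> real (nL l - 1) * thetaL l"
    using True nL_facts(2)[OF assms] by (intro mult_right_mono) auto
  also have "\<dots> = pi/2" by (rule nL_facts(3)[OF assms])
  finally have "real (j+1) * thetaL l \<le> pi/2" .
  hence "cot (real (j+1) * thetaL l) \<ge> 0" using nL_facts(2)[OF assms]
    by (intro cot_nonneg) auto
  thus ?thesis using True delta_nonneg[of l] by (simp add: zLJ_def)
qed (simp add: zLJ_def)

lemma q_even: "valid_Q q \<Longrightarrow> even l \<Longrightarrow> 2 \<le> l \<Longrightarrow> j < nL l \<Longrightarrow> q l j = (zL l, zLJ l j)"
proof -
  assume a: "valid_Q q" "even l" "2 \<le> l" "j < nL l"
  have "\<forall>l j. even l \<and> 2 \<le> l \<and> j < nL l \<longrightarrow> q l j = (zL l, zLJ l j)"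
    using a(1) unfolding valid_Q_def by (elim conjE)
  from this[rule_format, of l j] a(2-4) show ?thesis by simp
qed

lemma q_odd: "valid_Q q \<Longrightarrow> odd l \<Longrightarrow> 2 \<le> l \<Longrightarrow> j < nL l \<Longrightarrow>
   \<exists>l' j'. 2 \<le> l' \<and> l' < l \<and> j' < nL l' \<and> q l j = q l' j'"
proof -
  assume a: "valid_Q q" "odd l" "2 \<le> l" "j < nL l"
  have "\<forall>l j. odd l \<and> 2 \<le> l \<and> j < nL l \<longrightarrow>
        (\<exists>l' j'. 2 \<le> l' \<and> l' < l \<and> j' < nL l' \<and> q l j = q l' j' \<and>
           (\<forall>l'' j''. 2 \<le> l'' \<and> l'' < l \<and> j'' < nL l'' \<longrightarrow>
              xv l j \<bullet> q l'' j'' \<le> xv l j \<bullet> q l' j'))"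
    using a(1) unfolding valid_Q_def by (elim conjE)
  from this[rule_format, of l j] a(2-4) obtain l' j' where
    "2 \<le> l'" "l' < l" "j' < nL l'" "q l j = q l' j'" by auto
  thus ?thesis by blast
qed

lemma q_bound:
  assumes "valid_Q q"
  shows "2 \<le> l' \<Longrightarrow> j' < nL l' \<Longrightarrow> fst (q l' j') \<le> zL l' \<and> snd (q l' j') \<le> 1"
proof (induction l' arbitrary: j' rule: less_induct)
  case (less l')
  show ?case
  proof (cases "even l'")
    case True
    then show ?thesis using q_even[OF assms True less.prems] zLJ_le1[of l' j'] less.prems by simp
  next
    case False
    then obtain l1 j1 where h: "2 \<le> l1" "l1 < l'" "j1 < nL l1" "q l' j' = q l1 j1"
      using q_odd[OF assms False less.prems] by blast
    then show ?thesis using less.IH[of l1 j1] zL_mono[of l1 l'] by auto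
  qed
qed

lemma ang_le:
  assumes "2 \<le> l" "k \<le> nL l - 1"
  shows "real k * thetaL l \<le> pi/2"
proof -
  have "real k * thetaL l \<le> real (nL l - 1) * thetaL l"
    using assms nL_facts(2)[OF assms(1)] by (intro mult_right_mono) auto
  also have "\<dots> = pi/2" by (rule nL_facts(3)[OF assms(1)])
  finally show ?thesis .
qed

lemma key_id:
  fixes phi th :: real
  assumes "sin (phi + th) > 0"
  shows "cos phi - cot (phi + th) * sin phi = sin th / sin (phi + th)"
proof -
  have "sin th = sin ((phi + th) - phi)" by simp
  also have "\<dots> = sin (phi + th) * cos phi - cos (phi + th) * sin phi" by (rule sin_diff)
  finally have "sin th = sin (phi + th) * cos phi - cos (phi + th) * sin phi" .
  moreover have "cos phi - cot (phi + th) * sin phi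
      = (sin (phi + th) * cos phi - cos (phi + th) * sin phi) / sin (phi + th)"
  proof -
    have nz: "sin (phi + th) \<noteq> 0" using assms by (metis order_less_irrefl)
    have "(sin (phi + th) * cos phi - cos (phi + th) * sin phi) / sin (phi + th)
        = sin (phi + th) * cos phi / sin (phi + th) - cos (phi + th) * sin phi / sin (phi + th)"
      by (rule diff_divide_distrib)
    also have "\<dots> = cos phi - cot (phi + th) * sin phi" using nz by (simp add: cot_def)
    finally show ?thesis by simp
  qed
  ultimately show ?thesis by simp
qed

lemma gap_bound:
  assumes Q: "valid_Q q" and ev: "even l" and l2: "2 < l" and j: "j < nL l"
  shows "gap q l j \<ge> (if j < nL l - 1 then deltaL l * sin (thetaL l) / sin (real (j+1) * thetaL l) else 0)"
proof -
  define th where "th = thetaL l"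
  define d where "d = deltaL l"
  define phi where "phi = real j * th"
  define G where "G = (if j < nL l - 1 then d * sin th / sin (real (j+1) * th) else 0)"
  have l2': "2 \<le> l" using l2 by simp
  have th0: "th > 0" using nL_facts(2)[OF l2'] by (simp add: th_def)
  have phi_le: "phi \<le> pi/2" unfolding phi_def th_def using j l2' by (intro ang_le) auto
  have phi0: "phi \<ge> 0" unfolding phi_def using th0 by simp
  have cphi: "cos phi \<ge> 0" using phi_le phi0 by (intro cos_ge_zero) auto
  have sphi: "sin phi \<ge> 0" using phi_le phi0 by (intro sin_ge_zero) auto
  have d0: "d \<ge> 0" unfolding d_def by (rule delta_nonneg)
  have qlj: "q l j = (zL l, zLJ l j)" using Q ev l2' j by (rule q_even)
  have x: "xv l j = (cos phi, sin phi)" using ev by (simp add: xv_def phi_def th_def)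
  have zdl: "zL (l-1) = zL l - d" using zL_Suc[of "l-1"] l2 by (simp add: d_def)
  have Gid: "G = d * (cos phi - cot (real (j+1) * th) * sin phi)" if jn: "j < nL l - 1"
  proof -
    have e: "real (j+1) * th = phi + th" by (simp add: phi_def algebra_simps)
    have "real (j+1) * th \<le> pi/2" unfolding th_def using jn l2' by (intro ang_le) auto
    hence "sin (phi + th) > 0" using e th0 phi0 by (intro sin_gt_zero) auto
    thus ?thesis unfolding G_def using jn e key_id[of phi th] by simp
  qed
  have zlj: "zLJ l j = 1 - d * cot (real (j+1) * th)" if "j < nL l - 1"
    using that by (simp add: zLJ_def d_def th_def)
  have B0: "G \<le> (zL l - a) * cos phi + (zLJ l j - b) * sin phi"
    if ab: "a \<le> zL l - d" "b \<le> 1" for a b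
  proof (cases "j < nL l - 1")
    case True
    have "d * cos phi \<le> (zL l - a) * cos phi" using ab cphi by (intro mult_right_mono) auto
    moreover have "- (d * cot (real (j+1) * th)) * sin phi \<le> (zLJ l j - b) * sin phi"
      using ab sphi zlj[OF True] by (intro mult_right_mono) auto
    ultimately show ?thesis using Gid[OF True] by (simp add: algebra_simps)
  next
    case False
    hence "zLJ l j = 1" by (simp add: zLJ_def)
    moreover have "0 \<le> (zL l - a) * cos phi" using ab d0 cphi by simp
    moreover have "0 \<le> (1 - b) * sin phi" using ab sphi by simp
    ultimately show ?thesis using False by (simp add: G_def)
  qed
  have B1: "G \<le> (zLJ l j - zLJ l j') * sin phi" if jj: "j' < j" for j'
  proof -
    have j'n: "j' < nL l - 1" using jj j by simp
    have zlj': "zLJ l j' = 1 - d * cot (real (j'+1) * th)"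
      using j'n by (simp add: zLJ_def d_def th_def)
    have a0: "real (j'+1) * th > 0" using th0 by simp
    have a1: "real (j'+1) * th \<le> phi" unfolding phi_def using jj th0
      by (intro mult_right_mono) auto
    show ?thesis
    proof (cases "j < nL l - 1")
      case True
      have sp: "sin phi > 0" using a0 a1 phi_le by (intro sin_gt_zero) auto
      have "cot phi \<le> cot (real (j'+1) * th)" using a0 a1 phi_le by (intro cot_mono) auto
      hence "d * (cot phi - cot (real (j+1) * th)) * sin phi \<le>
             d * (cot (real (j'+1) * th) - cot (real (j+1) * th)) * sin phi"
        using d0 sp by (intro mult_right_mono mult_left_mono) auto
      moreover have "cot phi * sin phi = cos phi" using sp by (simp add: cot_def)
      moreover have "zLJ l j - zLJ l j' = d * (cot (real (j'+1) * th) - cot (real (j+1) * th))"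
        using zlj[OF True] zlj' by (simp add: algebra_simps)
      moreover have "d * (cot phi - cot (real (j+1) * th)) * sin phi
          = d * (cot phi * sin phi - cot (real (j+1) * th) * sin phi)" by (simp add: algebra_simps)
      ultimately show ?thesis using Gid[OF True] by metis
    next
      case False
      hence "zLJ l j = 1" by (simp add: zLJ_def)
      moreover have "cot (real (j'+1) * th) \<ge> 0" using a0 a1 phi_le by (intro cot_nonneg) auto
      ultimately show ?thesis using False zlj' d0 sphi by (simp add: G_def)
    qed
  qed
  have inner: "(q l j - p) \<bullet> xv l j = (zL l - fst p) * cos phi + (zLJ l j - snd p) * sin phi" for p
    by (cases p) (simp add: qlj x)
  have fin: "finite (before l j)"
  proof (rule finite_subset)
    show "before l j \<subseteq> (SIGMA l':{..l}. {..<nL l'})"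
      unfolding before_def idx_def by auto
  qed auto
  have "G \<le> gap q l j"
    unfolding gap_def
  proof (subst Min_ge_iff, goal_cases)
    case 3
    show ?case
    proof (intro ballI, elim insertE)
      fix v assume "v = (q l j - 0) \<bullet> xv l j"
      then show "G \<le> v" using inner[of 0] B0[of 0 0] zL_nonneg[of "l-1"] zdl by simp
    next
      fix v assume "v \<in> (\<lambda>(l', j'). (q l j - q l' j') \<bullet> xv l j) ` before l j"
      then obtain l' j' where m: "(l', j') \<in> before l j" and v: "v = (q l j - q l' j') \<bullet> xv l j"
        by auto
      show "G \<le> v"
      proof (cases "l' < l")
        case True
        have b: "2 \<le> l'" "j' < nL l'" using m unfolding before_def idx_def by auto
        have "fst (q l' j') \<le> zL l'" "snd (q l' j') \<le> 1" using q_bound[OF Q b] by auto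
        moreover have "zL l' \<le> zL (l-1)" using True by (intro zL_mono) auto
        ultimately show ?thesis using v inner B0 zdl by simp
      next
        case False
        hence "l' = l" "j' < j" using m unfolding before_def by auto
        moreover have "q l j' = (zL l, zLJ l j')" using Q ev l2' j \<open>j' < j\<close>
          by (intro q_even) auto
        ultimately show ?thesis using v inner B1 by simp
      qed
    qed
  qed (use fin in simp_all)
  thus ?thesis unfolding G_def d_def th_def .
qed

lemma sin_half:
  fixes th :: real
  assumes "0 < th" "th \<le> pi/4"
  shows "th / 2 \<le> sin th"
proof -
  have "\<bar>th\<bar> \<le> \<bar>tan th\<bar>" using assms by (intro abs_tan_ge) auto
  moreover have "tan th \<ge> 0" using assms unfolding tan_def
    by (intro divide_nonneg_nonneg sin_ge_zero cos_ge_zero) auto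
  ultimately have t: "th \<le> tan th" using assms by simp
  have "cos (pi/3) \<le> cos th" using assms by (intro cos_monotone_0_pi_le) auto
  hence c: "1/2 \<le> cos th" by (simp add: cos_60)
  have cp: "cos th > 0" using c by simp
  have "th * (1/2) \<le> tan th * cos th" using t c assms by (intro mult_mono) auto
  also have "tan th * cos th = sin th" using cp by (simp add: tan_def)
  finally show ?thesis by simp
qed

theorem corollary5p11:
  fixes q :: "nat \<Rightarrow> nat \<Rightarrow> real \<times> real" and l :: nat
  assumes "valid_Q q" and "even l" and "l > 2"
  shows "(\<Sum>j<nL l. gap q l j) \<ge> deltaL l * ln (real (nL l)) / 2"
proof -
  define th where "th = thetaL l"
  define d where "d = deltaL l"
  define m where "m = nL l - 1"
  have l2': "2 \<le> l" using assms by simp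
  have n3: "nL l \<ge> 3" by (rule nL_facts(1)[OF l2'])
  have n: "nL l = Suc m" using n3 by (simp add: m_def)
  have th0: "th > 0" using nL_facts(2)[OF l2'] by (simp add: th_def)
  have th4: "th \<le> pi/4" using nL_facts(4)[OF l2'] by (simp add: th_def)
  have d0: "d \<ge> 0" by (simp add: d_def delta_nonneg)
  have sth: "sin th \<ge> th / 2" using sin_half th0 th4 by simp
  have "(\<Sum>j<nL l. gap q l j) \<ge> (\<Sum>j<nL l. (if j < m then d * sin th / sin (real (j+1) * th) else 0))"
  proof (intro sum_mono)
    fix j assume "j \<in> {..<nL l}"
    thus "(if j < m then d * sin th / sin (real (j+1) * th) else 0) \<le> gap q l j"
      using gap_bound[OF assms, of j] unfolding m_def d_def th_def by simp
  qed
  also have "(\<Sum>j<nL l. (if j < m then d * sin th / sin (real (j+1) * th) else 0))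
      = (\<Sum>j<m. d * sin th / sin (real (j+1) * th))"
    unfolding n by (simp add: sum.lessThan_Suc)
  also have "(\<Sum>j<m. d * sin th / sin (real (j+1) * th)) \<ge> (\<Sum>j<m. d * sin th / (real (j+1) * th))"
  proof (intro sum_mono)
    fix j assume "j \<in> {..<m}"
    hence jm: "j + 1 \<le> nL l - 1" by (simp add: m_def)
    have a: "real (j+1) * th \<le> pi/2" unfolding th_def using jm l2' by (intro ang_le) auto
    have s0: "sin (real (j+1) * th) > 0" proof (intro sin_gt_zero)
      show "0 < real (j+1) * th" using th0 by simp
      thus "real (j+1) * th < pi" using a by linarith
    qed
    have s1: "sin (real (j+1) * th) \<le> real (j+1) * th" using th0 by (intro sin_x_le_x) simp
    have "sin th \<ge> 0" using sth th0 by simp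
    thus "d * sin th / (real (j+1) * th) \<le> d * sin th / sin (real (j+1) * th)"
      using s0 s1 d0 by (intro divide_left_mono) auto
  qed
  also have "(\<Sum>j<m. d * sin th / (real (j+1) * th)) = d * (sin th / th) * harm m"
    unfolding harm_altdef sum_distrib_left by (intro sum.cong) (auto simp: field_simps)
  also have "d * (sin th / th) * harm m \<ge> d * (1/2) * ln (real (nL l))"
  proof -
    have "ln (real (nL l)) \<le> harm m" using ln_le_harm[of m] n by (simp add: add.commute)
    moreover have "1/2 \<le> sin th / th" using sth th0 by (simp add: field_simps)
    moreover have "0 \<le> ln (real (nL l))" using n3 by simp
    moreover have "0 \<le> sin th / th" using sth th0 by simp
    ultimately show ?thesis using d0 by (intro mult_mono mult_left_mono mult_nonneg_nonneg) auto
  qed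
  finally show ?thesis by (simp add: d_def)
qed

end
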